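(* Let $\alpha\ge 0$, let $K\subset\mathbb{R}^d$ be a compact set with $\mathcal{H}^{\alpha}(K)<a$ (where $a>0$), and let $\varepsilon>0$. Then there exist a natural number $M$ and a family $\mathfrak{B}$ of closed balls such that: 1) $\mathfrak{B}$ covers $K$; 2) the center of every ball in $\mathfrak{B}$ lies in $K$ and its radius does not exceed $\varepsilon$; 3) $|\mathfrak{B}|=M$ and $\sum_{\overline{B}_{r_i}(x_i)\in\mathfrak{B}} r_i^{\alpha}<a$; 4) for every family $\mathfrak{B}'$ of closed balls satisfying 1), 2), 3) one has $\sum_{\overline{B}_{r_i}(x_i)\in\mathfrak{B}} r_i^{\alpha}\leq\sum_{\overline{B}_{r_i}(x_i)\in\mathfrak{B}'} r_i^{\alpha}$.
   Context: $\overline{B}_r(x)$ denotes the closed ball of radius $r\ge 0$ centered at $x$; $\mathcal{H}^\alpha$ is the $\alpha$-dimensional Hausdorff measure. The number $M$ may depend on $K$ and $\varepsilon$; in condition 3) for $\mathfrak{B}'$, the same $M$ is used. *)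

theory Defs
  imports "HOL-Analysis.Analysis"
begin

text \<open>Power with the convention 0^0 = 1 (as in the paper); for alpha > 0 this is powr.\<close>
definition rpow :: "real \<Rightarrow> real \<Rightarrow> real" where
  "rpow r \<alpha> = (if \<alpha> = 0 then 1 else r powr \<alpha>)"

definition hcost :: "real \<Rightarrow> 'a::metric_space set \<Rightarrow> real" where
  "hcost \<alpha> U = (if U = {} then 0 else rpow (diameter U) \<alpha>)"

definition hausdorff_pre :: "real \<Rightarrow> real \<Rightarrow> 'a::metric_space set \<Rightarrow> ennreal" where
  "hausdorff_pre \<alpha> \<delta> K =
     (INF U \<in> {U :: nat \<Rightarrow> 'a set. K \<subseteq> (\<Union>i. U i) \<and> (\<forall>i. bounded (U i) \<and> diameter (U i) \<le> \<delta>)}.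
        (\<Sum>i. ennreal (hcost \<alpha> (U i))))"

definition hausdorff_measure :: "real \<Rightarrow> 'a::metric_space set \<Rightarrow> ennreal" where
  "hausdorff_measure \<alpha> K = (SUP \<delta> \<in> {0<..}. hausdorff_pre \<alpha> \<delta> K)"

text \<open>A finite family of closed balls is represented by the set of its (center, radius) pairs.\<close>
definition good_family :: "real \<Rightarrow> 'a::euclidean_space set \<Rightarrow> real \<Rightarrow> real \<Rightarrow> nat \<Rightarrow> ('a \<times> real) set \<Rightarrow> bool" where
  "good_family \<alpha> K a \<epsilon> M B \<longleftrightarrow>
     finite B \<and>
     K \<subseteq> (\<Union>(x, r)\<in>B. cball x r) \<and>
     (\<forall>(x, r)\<in>B. x \<in> K \<and> 0 \<le> r \<and> r \<le> \<epsilon>) \<and>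
     card B = M \<and> (\<Sum>(x, r)\<in>B. rpow r \<alpha>) < a"

end

theory Submission imports Defs begin

lemma rpow_nonneg: "0 \<le> rpow r \<alpha>"
  by (simp add: rpow_def)

lemma hcost_nonneg: "0 \<le> hcost \<alpha> U"
  by (simp add: hcost_def rpow_nonneg)

lemma exists_good:
  fixes K :: "'a::euclidean_space set" and \<alpha> a \<epsilon> :: real
  assumes "\<alpha> \<ge> 0" and "compact K" and "a > 0"
    and "hausdorff_measure \<alpha> K < ennreal a" and "\<epsilon> > 0"
  shows "\<exists>B. finite B \<and> K \<subseteq> (\<Union>(x, r)\<in>B. cball x r) \<and>
     (\<forall>(x, r)\<in>B. x \<in> K \<and> 0 \<le> r \<and> r \<le> \<epsilon>) \<and> (\<Sum>(x, r)\<in>B. rpow r \<alpha>) < a"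
proof -
  have "hausdorff_pre \<alpha> (\<epsilon>/2) K \<le> hausdorff_measure \<alpha> K"
    unfolding hausdorff_measure_def using assms(5) by (intro SUP_upper) auto
  then have "hausdorff_pre \<alpha> (\<epsilon>/2) K < ennreal a" using assms(4) by order
  then obtain U :: "nat \<Rightarrow> 'a set" where U1: "K \<subseteq> (\<Union>i. U i)"
    and U2: "\<And>i. bounded (U i)" and U3: "\<And>i. diameter (U i) \<le> \<epsilon>/2"
    and U4: "(\<Sum>i. ennreal (hcost \<alpha> (U i))) < ennreal a"
    unfolding hausdorff_pre_def INF_less_iff by blast
  define c where "c = (\<lambda>i. hcost \<alpha> (U i))"
  have c0: "\<And>i. 0 \<le> c i" by (simp add: c_def hcost_nonneg)
  have sc: "summable c"
    using U4 c0 by (intro summable_suminf_not_top) (auto simp: c_def)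
  define s where "s = suminf c"
  have "ennreal s < ennreal a" using U4 suminf_ennreal2[OF c0 sc] by (simp add: s_def c_def)
  moreover have "0 \<le> s" unfolding s_def using sc c0 by (simp add: suminf_nonneg)
  ultimately have sa: "s < a" by (simp add: ennreal_less_iff)
  define \<eta> where "\<eta> = a - s"
  have \<eta>0: "\<eta> > 0" using sa by (simp add: \<eta>_def)
  define e where "e i = (\<eta>/2) * (1/2)^Suc i" for i
  have e0: "\<And>i. 0 < e i" using \<eta>0 by (simp add: e_def)
  have se: "e sums (\<eta>/2)" unfolding e_def using sums_mult[OF power_half_series, of "\<eta>/2"] by simp
  define \<rho> where "\<rho> i = (if \<alpha> = 0 then \<epsilon> else min \<epsilon> ((c i + e i) powr (1/\<alpha>)))" for i
  have \<rho>: "diameter (U i) < \<rho> i \<and> 0 \<le> \<rho> i \<and> \<rho> i \<le> \<epsilon> \<and> rpow (\<rho> i) \<alpha> \<le> c i + e i"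
    if "U i \<noteq> {}" for i
  proof (cases "\<alpha> = 0")
    case True
    then show ?thesis using U3[of i] assms(5) that e0[of i]
      by (simp add: \<rho>_def c_def hcost_def rpow_def)
  next
    case False
    then have a0: "\<alpha> > 0" using assms(1) by simp
    have d0: "0 \<le> diameter (U i)" by (simp add: diameter_ge_0 U2)
    have cd: "c i = diameter (U i) powr \<alpha>" using that False by (simp add: c_def hcost_def rpow_def)
    have "diameter (U i) = (c i) powr (1/\<alpha>)"
      using d0 a0 by (simp add: cd powr_powr)
    also have "\<dots> < (c i + e i) powr (1/\<alpha>)"
      using a0 c0[of i] e0[of i] by (intro powr_less_mono2) auto
    finally have 1: "diameter (U i) < (c i + e i) powr (1/\<alpha>)" .
    have "min \<epsilon> ((c i + e i) powr (1/\<alpha>)) powr \<alpha> \<le> ((c i + e i) powr (1/\<alpha>)) powr \<alpha>"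
      using a0 assms(5) by (intro powr_mono2) auto
    also have "\<dots> = c i + e i" using a0 c0[of i] e0[of i] by (simp add: powr_powr)
    finally show ?thesis using 1 U3[of i] assms(5) d0 False
      by (simp add: \<rho>_def rpow_def)
  qed
  define J where "J = {i. U i \<inter> K \<noteq> {}}"
  define x where "x i = (SOME y. y \<in> U i \<inter> K)" for i
  have x: "x i \<in> U i \<inter> K" if "i \<in> J" for i
  proof -
    have "\<exists>y. y \<in> U i \<inter> K" using that unfolding J_def by blast
    then show ?thesis unfolding x_def by (rule someI_ex)
  qed
  have cov: "K \<subseteq> (\<Union>i\<in>J. ball (x i) (\<rho> i))"
  proof
    fix y assume y: "y \<in> K"
    then obtain i where i: "y \<in> U i" using U1 by blast
    then have iJ: "i \<in> J" using y by (auto simp: J_def)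
    have "dist (x i) y \<le> diameter (U i)"
      using x[OF iJ] i U2 by (intro diameter_bounded_bound) auto
    also have "\<dots> < \<rho> i" using \<rho>[of i] i by blast
    finally show "y \<in> (\<Union>i\<in>J. ball (x i) (\<rho> i))" using iJ by auto
  qed
  obtain F where F: "F \<subseteq> J" "finite F" "K \<subseteq> (\<Union>i\<in>F. ball (x i) (\<rho> i))"
    by (rule compactE_image[OF assms(2) _ cov]) auto
  define B where "B = (\<lambda>i. (x i, \<rho> i)) ` F"
  have ne: "U i \<noteq> {}" if "i \<in> F" for i using x[of i] that F(1) by auto
  have "(\<Sum>(x, r)\<in>B. rpow r \<alpha>) \<le> (\<Sum>i\<in>F. rpow (\<rho> i) \<alpha>)"
    unfolding B_def using sum_image_le[OF F(2), of "\<lambda>(x, r). rpow r \<alpha>" "\<lambda>i. (x i, \<rho> i)"]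
    by (simp add: rpow_nonneg o_def)
  also have "\<dots> \<le> (\<Sum>i\<in>F. c i + e i)"
    using \<rho> ne by (intro sum_mono) auto
  also have "\<dots> = (\<Sum>i\<in>F. c i) + (\<Sum>i\<in>F. e i)" by (simp add: sum.distrib)
  also have "\<dots> \<le> s + \<eta>/2"
  proof (intro add_mono)
    show "(\<Sum>i\<in>F. c i) \<le> s" unfolding s_def using sc c0 F(2) by (intro sum_le_suminf) auto
    show "(\<Sum>i\<in>F. e i) \<le> \<eta>/2" using se e0 F(2) sum_le_suminf[of e F] sums_summable[OF se]
      by (simp add: sums_iff less_imp_le)
  qed
  also have "\<dots> < a" using sa unfolding \<eta>_def by (simp add: field_simps)
  finally have sum: "(\<Sum>(x, r)\<in>B. rpow r \<alpha>) < a" .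
  have "K \<subseteq> (\<Union>(x, r)\<in>B. cball x r)"
  proof
    fix y assume "y \<in> K"
    then obtain i where "i \<in> F" "y \<in> ball (x i) (\<rho> i)" using F(3) by blast
    then show "y \<in> (\<Union>(x, r)\<in>B. cball x r)" unfolding B_def by force
  qed
  moreover have "\<forall>(x, r)\<in>B. x \<in> K \<and> 0 \<le> r \<and> r \<le> \<epsilon>"
    unfolding B_def using x F(1) \<rho> ne by (auto simp del: IntE)
  ultimately show ?thesis using sum F(2) unfolding B_def by blast
qed


lemma compact_C:
  fixes K :: "'a::euclidean_space set" and \<epsilon> :: real and z0 :: "'a \<times> real" and M :: nat
  assumes "compact K"
  shows "compact (PiE UNIV (\<lambda>i. if i < M then K \<times> {0..\<epsilon>} else {z0})
           \<inter> {f. K \<subseteq> (\<Union>i<M. cball (fst (f i)) (snd (f i)))})"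
proof (rule compact_Int_closed)
  have "compactin (product_topology (\<lambda>i. euclidean) UNIV)
          (PiE UNIV (\<lambda>i. if i < M then K \<times> {0..\<epsilon>} else {z0}))"
    unfolding compactin_PiE using assms by (auto intro: compact_Times)
  then show "compact (PiE UNIV (\<lambda>i. if i < M then K \<times> {0..\<epsilon>} else {z0}))"
    by (simp add: euclidean_product_topology)
next
  have op: "open {p::'a \<times> real. snd p < dist (fst p) y}" for y
    by (intro open_Collect_less continuous_intros)
  have eq: "- {f. K \<subseteq> (\<Union>i<M. cball (fst (f i)) (snd (f i)))}
      = (\<Union>y\<in>K. {f. \<forall>i\<in>{..<M}. f (id i) \<in> {p. snd p < dist (fst p) y}})"
    by (auto simp: subset_iff not_le; meson not_le)
  show "closed {f. K \<subseteq> (\<Union>i<M. cball (fst (f i)) (snd (f i)))}"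
    unfolding closed_def eq
    by (intro open_UN ballI product_topology_basis' op finite_lessThan)
qed

lemma cont_Phi:
  fixes C :: "(nat \<Rightarrow> 'a::euclidean_space \<times> real) set"
  assumes "\<alpha> > 0" "\<And>f i. f \<in> C \<Longrightarrow> i < M \<Longrightarrow> snd (f i) \<ge> 0"
  shows "continuous_on C (\<lambda>f. \<Sum>i<M. snd (f i) powr \<alpha>)"
proof (intro continuous_on_sum)
  fix i assume i: "i \<in> {..<M}"
  have c: "continuous_on C (\<lambda>f. snd (f i))"
    by (intro continuous_on_snd continuous_on_subset[OF continuous_on_product_coordinates]) auto
  show "continuous_on C (\<lambda>f. snd (f i) powr \<alpha>)"
    unfolding continuous_on_def
  proof
    fix f assume f: "f \<in> C"
    have t: "((\<lambda>g. snd (g i)) \<longlongrightarrow> snd (f i)) (at f within C)"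
      using c f by (simp add: continuous_on_def)
    have ev: "eventually (\<lambda>g. snd (g i) \<ge> 0) (at f within C)"
      using assms(2) i by (auto simp: eventually_at_filter)
    show "((\<lambda>g. snd (g i) powr \<alpha>) \<longlongrightarrow> snd (f i) powr \<alpha>) (at f within C)"
      using t ev assms(1) by (intro tendsto_powr') auto
  qed
qed


theorem lemma9:
  fixes K :: "'a::euclidean_space set" and \<alpha> a \<epsilon> :: real
  assumes "\<alpha> \<ge> 0" and "compact K" and "a > 0"
    and "hausdorff_measure \<alpha> K < ennreal a" and "\<epsilon> > 0"
  shows "\<exists>M::nat. \<exists>B :: ('a \<times> real) set.
           K \<subseteq> (\<Union>(x, r)\<in>B. cball x r) \<and>
           (\<forall>(x, r)\<in>B. x \<in> K \<and> 0 \<le> r \<and> r \<le> \<epsilon>) \<and>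
           finite B \<and> card B = M \<and> (\<Sum>(x, r)\<in>B. rpow r \<alpha>) < a \<and>
           (\<forall>B'. good_family \<alpha> K a \<epsilon> M B' \<longrightarrow>
                 (\<Sum>(x, r)\<in>B. rpow r \<alpha>) \<le> (\<Sum>(x, r)\<in>B'. rpow r \<alpha>))"
proof (cases "\<alpha> = 0")
  case True
  obtain B0 where B0: "finite B0" "K \<subseteq> (\<Union>(x, r)\<in>B0. cball x r)"
     "\<forall>(x, r)\<in>B0. x \<in> K \<and> 0 \<le> r \<and> r \<le> \<epsilon>" "(\<Sum>(x, r)\<in>B0. rpow r \<alpha>) < a"
    using exists_good[OF assms] by blast
  have r1: "\<And>B. (\<Sum>(x, r)\<in>B. rpow r \<alpha>) = real (card B)"
    using True by (simp add: rpow_def case_prod_beta)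
  show ?thesis
    by (rule exI[of _ "card B0"], rule exI[of _ B0]) (use B0 in \<open>auto simp: r1 good_family_def\<close>)
next
  case False
  then have a0: "\<alpha> > 0" using assms(1) by simp
  have rp: "\<And>r. rpow r \<alpha> = r powr \<alpha>" using False by (simp add: rpow_def)
  show ?thesis
  proof (cases "finite K")
    case True
    define B where "B = (\<lambda>x. (x, 0::real)) ` K"
    have s0: "(\<Sum>(x, r)\<in>B. rpow r \<alpha>) = 0"
      unfolding B_def by (simp add: rp sum.reindex inj_on_def)
    have "\<And>B'. good_family \<alpha> K a \<epsilon> (card B) B' \<Longrightarrow> 0 \<le> (\<Sum>(x, r)\<in>B'. rpow r \<alpha>)"
      by (intro sum_nonneg) (auto simp: rpow_nonneg)
    then show ?thesis
      by (intro exI[of _ "card B"] exI[of _ B])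
        (use True assms(5) s0 assms(3) in \<open>auto simp: B_def\<close>)
  next
    case Kinf: False
    obtain B0 where B0: "finite B0" "K \<subseteq> (\<Union>(x, r)\<in>B0. cball x r)"
       "\<forall>(x, r)\<in>B0. x \<in> K \<and> 0 \<le> r \<and> r \<le> \<epsilon>" "(\<Sum>(x, r)\<in>B0. rpow r \<alpha>) < a"
      using exists_good[OF assms] by blast
    define M where "M = card B0"
    obtain k0 where k0: "k0 \<in> K" using Kinf by fastforce
    define z0 where "z0 = (k0, 0::real)"
    define S where "S = (\<lambda>i. if i < M then K \<times> {0..\<epsilon>} else {z0})"
    define C where "C = PiE UNIV S \<inter> {f. K \<subseteq> (\<Union>i<M. cball (fst (f i)) (snd (f i)))}"
    define \<Phi> where "\<Phi> = (\<lambda>f::nat \<Rightarrow> 'a \<times> real. \<Sum>i<M. snd (f i) powr \<alpha>)"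
    have cC: "compact C" unfolding C_def S_def by (rule compact_C[OF assms(2)])
    have CS: "f i \<in> K \<times> {0..\<epsilon>}" if "f \<in> C" "i < M" for f i
    proof -
      have "f \<in> PiE UNIV S" using that(1) unfolding C_def by blast
      then have "f i \<in> S i" by (rule PiE_mem) simp
      then show ?thesis using that(2) by (simp add: S_def)
    qed
    have Cpos: "\<And>f i. f \<in> C \<Longrightarrow> i < M \<Longrightarrow> snd (f i) \<ge> 0"
      using CS by (force simp: mem_Times_iff)
    have cPhi: "continuous_on C \<Phi>" unfolding \<Phi>_def using cont_Phi[OF a0, of C M] Cpos by blast
    have enum: "\<exists>f\<in>C. \<Phi> f = (\<Sum>(x, r)\<in>B'. rpow r \<alpha>)"
      if B': "finite B'" "card B' = M" "K \<subseteq> (\<Union>(x, r)\<in>B'. cball x r)"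
       "\<forall>(x, r)\<in>B'. x \<in> K \<and> 0 \<le> r \<and> r \<le> \<epsilon>" for B'
    proof -
      obtain h where h: "bij_betw h {0..<M} B'"
        using ex_bij_betw_nat_finite[OF B'(1)] B'(2) by blast
      define f where "f = (\<lambda>i. if i < M then h i else z0)"
      have hm: "\<And>i. i < M \<Longrightarrow> h i \<in> B'" using h by (auto simp: bij_betw_def)
      have "f \<in> PiE UNIV S"
        using hm B'(4) unfolding f_def S_def PiE_UNIV_domain by (force simp: Pi_def)
      moreover have "K \<subseteq> (\<Union>i<M. cball (fst (f i)) (snd (f i)))"
      proof
        fix y assume "y \<in> K"
        then obtain p where p: "p \<in> B'" "y \<in> cball (fst p) (snd p)" using B'(3) by auto
        then obtain i where "i < M" "h i = p" using h unfolding bij_betw_def by auto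
        then show "y \<in> (\<Union>i<M. cball (fst (f i)) (snd (f i)))" using p unfolding f_def by auto
      qed
      moreover have "\<Phi> f = (\<Sum>(x, r)\<in>B'. rpow r \<alpha>)"
      proof -
        have "\<Phi> f = (\<Sum>i\<in>{0..<M}. (\<lambda>(x, r). rpow r \<alpha>) (h i))"
          unfolding \<Phi>_def f_def by (intro sum.cong) (auto simp: rp case_prod_beta)
        also have "\<dots> = (\<Sum>(x, r)\<in>B'. rpow r \<alpha>)" by (rule sum.reindex_bij_betw[OF h])
        finally show ?thesis .
      qed
      ultimately show ?thesis unfolding C_def by blast
    qed
    obtain f0 where f0: "f0 \<in> C" "\<Phi> f0 = (\<Sum>(x, r)\<in>B0. rpow r \<alpha>)"
      using enum[OF B0(1) M_def[symmetric] B0(2,3)] by blast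
    obtain fm where fm: "fm \<in> C" "\<And>f. f \<in> C \<Longrightarrow> \<Phi> fm \<le> \<Phi> f"
      using continuous_attains_inf[OF cC _ cPhi] f0(1) by blast
    define B1 where "B1 = fm ` {..<M}"
    have fB1: "finite B1" and cB1: "card B1 \<le> M" unfolding B1_def
      using card_image_le[of "{..<M}" fm] by auto
    have fmS: "\<And>i. i < M \<Longrightarrow> fm i \<in> K \<times> {0..\<epsilon>}"
      using fm(1) CS by blast
    have sB1: "(\<Sum>(x, r)\<in>B1. rpow r \<alpha>) \<le> \<Phi> fm"
    proof -
      have "(\<Sum>(x, r)\<in>B1. rpow r \<alpha>) \<le> sum ((\<lambda>(x, r). rpow r \<alpha>) \<circ> fm) {..<M}"
        unfolding B1_def by (rule sum_image_le) (auto simp: rpow_nonneg case_prod_beta)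
      also have "\<dots> = \<Phi> fm" unfolding \<Phi>_def by (simp add: rp case_prod_beta)
      finally show ?thesis .
    qed
    have "infinite ((\<lambda>x. (x, 0::real)) ` K)"
      using Kinf finite_imageD[of "\<lambda>x. (x, 0::real)" K] by (auto simp: inj_on_def)
    then have "infinite ((\<lambda>x. (x, 0::real)) ` K - B1)" using fB1 by simp
    then obtain Z where Z: "finite Z" "card Z = M - card B1" "Z \<subseteq> (\<lambda>x. (x, 0::real)) ` K - B1"
      using infinite_arbitrarily_large by blast
    define B where "B = B1 \<union> Z"
    have cardB: "card B = M" unfolding B_def using Z fB1 cB1
      by (subst card_Un_disjoint) auto
    have sZ: "(\<Sum>(x, r)\<in>Z. rpow r \<alpha>) = 0"
      using Z(3) a0 by (intro sum.neutral) (auto simp: rp)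
    have sB: "(\<Sum>(x, r)\<in>B. rpow r \<alpha>) \<le> \<Phi> fm"
      unfolding B_def using Z fB1 sB1 sZ by (subst sum.union_disjoint) auto
    have covB: "K \<subseteq> (\<Union>(x, r)\<in>B. cball x r)"
    proof
      fix y assume "y \<in> K"
      then obtain i where i: "i < M" "y \<in> cball (fst (fm i)) (snd (fm i))"
        using fm(1) unfolding C_def by blast
      have iB: "fm i \<in> B" unfolding B_def B1_def using i(1) by blast
      have "y \<in> (case fm i of (x, r) \<Rightarrow> cball x r)" using i(2) by (cases "fm i") simp
      then show "y \<in> (\<Union>(x, r)\<in>B. cball x r)" by (rule UN_I[OF iB])
    qed
    have centB': "fst p \<in> K \<and> 0 \<le> snd p \<and> snd p \<le> \<epsilon>" if p: "p \<in> B" for p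
    proof (cases "p \<in> B1")
      case True
      then obtain i where "i < M" "p = fm i" unfolding B1_def by blast
      then show ?thesis using fmS[of i] by (auto simp: mem_Times_iff)
    next
      case False
      then have "p \<in> Z" using p unfolding B_def by blast
      then obtain x where "x \<in> K" "p = (x, 0)" using Z(3) by blast
      then show ?thesis using assms(5) by simp
    qed
    have centB: "\<forall>(x, r)\<in>B. x \<in> K \<and> 0 \<le> r \<and> r \<le> \<epsilon>"
      using centB' by (simp add: case_prod_beta)
    have "\<Phi> fm \<le> \<Phi> f0" by (rule fm(2)[OF f0(1)])
    then have ltB: "(\<Sum>(x, r)\<in>B. rpow r \<alpha>) < a"
      using sB f0(2) B0(4) by linarith
    have minB: "(\<Sum>(x, r)\<in>B. rpow r \<alpha>) \<le> (\<Sum>(x, r)\<in>B'. rpow r \<alpha>)"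
      if "good_family \<alpha> K a \<epsilon> M B'" for B'
    proof -
      have g: "finite B'" "card B' = M" "K \<subseteq> (\<Union>(x, r)\<in>B'. cball x r)"
       "\<forall>(x, r)\<in>B'. x \<in> K \<and> 0 \<le> r \<and> r \<le> \<epsilon>"
        using that unfolding good_family_def by auto
      obtain f where f: "f \<in> C" "\<Phi> f = (\<Sum>(x, r)\<in>B'. rpow r \<alpha>)"
        using enum[OF g] by blast
      have "\<Phi> fm \<le> \<Phi> f" by (rule fm(2)[OF f(1)])
      then show ?thesis using sB f(2) by linarith
    qed
    have finB: "finite B" unfolding B_def using Z(1) fB1 by simp
    show ?thesis
      by (intro exI[of _ M] exI[of _ B]) (use covB centB ltB minB cardB finB in blast)
  qed
qed

end
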